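(* Let $n\ge3$, $l\ge1$, $\mathfrak g=B^{(1)}_n$, $B$ the level-$l$ perfect crystal of the context, $\lambda=l\Lambda_0$, $d=2n-1$, and $i^{(j)}_1=i^{(j)}_{2n-1}=\epsilon(j+1)$, $i^{(j)}_a=i^{(j)}_{2n-a}=a$ for $2\le a\le n$. Then: (II) $B^{(j)}_d=B$ for all $j\ge1$; (III) $\langle\lambda_j,h_{i^{(j)}_a}\rangle\le\varepsilon_{i^{(j)}_a}(b)$ for all $j\ge1$, $1\le a\le d$, $b\in B^{(j)}_{a-1}$; (IV') for all $j\ge1$, $a=1,\dots,d$: $\varepsilon_{i^{(j)}_{a+1}}(b^{(j)}_a)=0$, $\varphi_{i^{(j)}_{a+1}}(b^{(j)}_a)>0$ (with $i^{(j)}_{d+1}:=i^{(j+1)}_1$), and $b^{(j+1)}_0=\tilde f_{i^{(j+1)}_1}^mb^{(j)}_d$ with $m=\langle\lambda_{j+1},h_{i^{(j+1)}_1}\rangle$. Moreover $B^{(j)}_0=\{(0,\dots,0,l)\}$ ($j$ odd), $\{(l,0,\dots,0)\}$ ($j$ even), $B^{(j)}_{2n-1}=B$, and for $1\le a\le n-1$: $B^{(j)}_a$ is the set of $b\in B$ whose coordinates are all $0$ except possibly $x_2,\dots,x_{a+1},\bar x_1$ ($j$ odd), resp. except possibly $x_1,\dots,x_{a+1}$ ($j$ even); $B^{(j)}_{n+a-1}$ is the set of $b\in B$ whose coordinates are all $0$ except possibly $x_2,\dots,x_n,x_0,\bar x_n,\dots,\bar x_{n-a+1},\bar x_1$ ($j$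 odd), resp. except possibly $x_1,\dots,x_n,x_0,\bar x_n,\dots,\bar x_{n-a+1}$ ($j$ even). Also $b^{(j)}_0=(0,\dots,0,l)$ ($j$ odd), $(l,0,\dots,0)$ ($j$ even); $b^{(j)}_{2n-1}=(l,0,\dots,0)$ ($j$ odd), $(0,\dots,0,l)$ ($j$ even); and for $1\le a\le n-1$, $b^{(j)}_a$ has $x_{a+1}=l$ and all other coordinates $0$, and $b^{(j)}_{n+a-1}$ has $\bar x_{n-a+1}=l$ and all other coordinates $0$.
   Context: $\epsilon(i)=0$ for $i$ even and $1$ for $i$ odd; $(x)_+=\max(x,0)$. $B=\{(x_1,\dots,x_n,x_0,\bar x_n,\dots,\bar x_1)\in\mathbb Z^{2n}\times\{0,1\}: x_i,\bar x_i\ge0,\ \sum_{i=1}^n(x_i+\bar x_i)=l\}$ (coordinates written in this order). Crystal structure: $\tilde f_0b=(x_1,x_2+1,\dots,\bar x_2,\bar x_1-1)$ if $x_2\ge\bar x_2$, $(x_1+1,x_2,\dots,\bar x_2-1,\bar x_1)$ if $x_2<\bar x_2$; for $1\le i\le n-1$, $\tilde f_ib$ replaces $(x_i,x_{i+1})$ by $(x_i-1,x_{i+1}+1)$ if $x_{i+1}\ge\bar x_{i+1}$, and $(\bar x_{i+1},\bar x_i)$ by $(\bar x_{i+1}-1,\bar x_i+1)$ if $x_{i+1}<\bar x_{i+1}$; $\tilde f_nb$ replaces $(x_n,x_0)$ by $(x_n-1,x_0+1)$ if $x_0=0$ and $(x_0,\bar x_n)$ by $(x_0-1,\bar x_n+1)$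 if $x_0=1$; $\tilde e_ib=b'$ iff $\tilde f_ib'=b$, and $\tilde f_ib=0$ if the result is not in $B$. $\varphi_0(b)=\bar x_1+(\bar x_2-x_2)_+$, $\varepsilon_0(b)=x_1+(x_2-\bar x_2)_+$; $\varphi_i(b)=x_i+(\bar x_{i+1}-x_{i+1})_+$, $\varepsilon_i(b)=\bar x_i+(x_{i+1}-\bar x_{i+1})_+$ ($1\le i\le n-1$); $\varphi_n(b)=2x_n+x_0$, $\varepsilon_n(b)=2\bar x_n+x_0$. For $\lambda=l\Lambda_0$: $\lambda_j=l\Lambda_{\epsilon(j)}$ and the ground state elements are $\overline b_j=(0,\dots,0,l)$ for $j$ odd, $(l,0,\dots,0)$ for $j$ even; $\langle\lambda_j,h_i\rangle$ is the coefficient of $\Lambda_i$ in $\lambda_j$. Given $d$, $i^{(j)}_a$: $B^{(j)}_0=\{\overline b_j\}$, $B^{(j)}_a=\bigcup_{n\ge0}\tilde f_{i^{(j)}_a}^nB^{(j)}_{a-1}\setminus\{0\}$; $b^{(j)}_0=\overline b_j$, $b^{(j)}_a=\tilde f_{i^{(j)}_a}^{\varphi_{i^{(j)}_a}(b^{(j)}_{a-1})}b^{(j)}_{a-1}$. *)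

theory Defs
  imports Main
begin

text \<open>Elements of the perfect crystal B for B_n^(1):
  (x_1,...,x_n, x_0, xbar_n,...,xbar_1).  xs i = x_i, xbs i = xbar_i (i = 1..n),
  x0 = x_0.  Coordinates outside 1..n are forced to be 0 by membership in B.\<close>
datatype crys = Cr (xs: "nat \<Rightarrow> int") (x0: int) (xbs: "nat \<Rightarrow> int")

definition eps :: "nat \<Rightarrow> nat" where
  "eps i = (if even i then 0 else 1)"

definition pos :: "int \<Rightarrow> int" where
  "pos x = max x 0"

definition Bcrys :: "nat \<Rightarrow> nat \<Rightarrow> crys set" where
  "Bcrys n l = {b. (\<forall>i. xs b i \<ge> 0 \<and> xbs b i \<ge> 0)
      \<and> (\<forall>i. (i = 0 \<or> i > n) \<longrightarrow> xs b i = 0 \<and> xbs b i = 0)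
      \<and> x0 b \<in> {0, 1}
      \<and> (\<Sum>i=1..n. xs b i + xbs b i) + x0 b = int l}"

definition fraw :: "nat \<Rightarrow> nat \<Rightarrow> crys \<Rightarrow> crys" where
  "fraw n i b = (let x = xs b; z = x0 b; y = xbs b in
     if i = 0 then
       (if x 2 \<ge> y 2 then Cr (x(2 := x 2 + 1)) z (y(1 := y 1 - 1))
        else Cr (x(1 := x 1 + 1)) z (y(2 := y 2 - 1)))
     else if i < n then
       (if x (i+1) \<ge> y (i+1) then Cr (x(i := x i - 1, i+1 := x (i+1) + 1)) z y
        else Cr x z (y(i+1 := y (i+1) - 1, i := y i + 1)))
     else
       (if z = 0 then Cr (x(n := x n - 1)) (z + 1) y
        else Cr x (z - 1) (y(n := y n + 1))))"

text \<open>f_i b; None represents 0.\<close>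
definition ftil :: "nat \<Rightarrow> nat \<Rightarrow> nat \<Rightarrow> crys \<Rightarrow> crys option" where
  "ftil n l i b = (if i \<le> n \<and> fraw n i b \<in> Bcrys n l then Some (fraw n i b) else None)"

fun fpow :: "nat \<Rightarrow> nat \<Rightarrow> nat \<Rightarrow> nat \<Rightarrow> crys \<Rightarrow> crys option" where
  "fpow n l i 0 b = Some b"
| "fpow n l i (Suc k) b = (case fpow n l i k b of None \<Rightarrow> None | Some b' \<Rightarrow> ftil n l i b')"

definition vphi :: "nat \<Rightarrow> nat \<Rightarrow> crys \<Rightarrow> int" where
  "vphi n i b = (if i = 0 then xbs b 1 + pos (xbs b 2 - xs b 2)
     else if i < n then xs b i + pos (xbs b (i+1) - xs b (i+1))
     else 2 * xs b n + x0 b)"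

definition veps :: "nat \<Rightarrow> nat \<Rightarrow> crys \<Rightarrow> int" where
  "veps n i b = (if i = 0 then xs b 1 + pos (xs b 2 - xbs b 2)
     else if i < n then xbs b i + pos (xs b (i+1) - xbs b (i+1))
     else 2 * xbs b n + x0 b)"

text \<open>\<langle>\<lambda>_j, h_i\<rangle> for \<lambda>_j = l \<Lambda>_{eps j}.\<close>
definition lam :: "nat \<Rightarrow> nat \<Rightarrow> nat \<Rightarrow> nat" where
  "lam l j i = (if i = eps j then l else 0)"

definition ground :: "nat \<Rightarrow> nat \<Rightarrow> crys" where
  "ground l j = (if odd j then Cr (\<lambda>_. 0) 0 ((\<lambda>_. 0)(1 := int l))
                 else Cr ((\<lambda>_. 0)(1 := int l)) 0 (\<lambda>_. 0))"

definition idx :: "nat \<Rightarrow> nat \<Rightarrow> nat \<Rightarrow> nat" where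
  "idx n j a = (if a = 1 \<or> a = 2*n - 1 then eps (j+1) else if a \<le> n then a else 2*n - a)"

fun Bset :: "nat \<Rightarrow> nat \<Rightarrow> nat \<Rightarrow> nat \<Rightarrow> crys set" where
  "Bset n l j 0 = {ground l j}"
| "Bset n l j (Suc a) = {b'. \<exists>b \<in> Bset n l j a. \<exists>k. fpow n l (idx n j (Suc a)) k b = Some b'}"

fun bseq :: "nat \<Rightarrow> nat \<Rightarrow> nat \<Rightarrow> nat \<Rightarrow> crys" where
  "bseq n l j 0 = ground l j"
| "bseq n l j (Suc a) = the (fpow n l (idx n j (Suc a))
                               (nat (vphi n (idx n j (Suc a)) (bseq n l j a))) (bseq n l j a))"

end

theory Submission
  imports Defs
begin


lemma sum_upd: "finite A \<Longrightarrow> p \<in> A \<Longrightarrow> sum (f(p := v)) A = sum f A - f p + (v::int)"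
proof -
  assume a: "finite A" "p \<in> A"
  have "sum (f(p := v)) A = (f(p:=v)) p + sum (f(p := v)) (A - {p})"
    using a by (simp add: sum.remove)
  also have "sum (f(p := v)) (A - {p}) = sum f (A - {p})" by (rule sum.cong) auto
  also have "sum f (A - {p}) = sum f A - f p" using a by (simp add: sum.remove)
  finally show ?thesis by simp
qed

lemma sum_upd2: "finite A \<Longrightarrow> p \<in> A \<Longrightarrow> q \<in> A \<Longrightarrow> p \<noteq> q \<Longrightarrow>
   sum (f(p := f p + c, q := f q - (c::int))) A = sum f A"
proof -
  assume a: "finite A" "p \<in> A" "q \<in> A" "p \<noteq> q"
  have "sum (f(p := f p + c, q := f q - c)) A = sum (f(p := f p + c)) A - (f(p := f p + c)) q + (f q - c)"
    using a by (intro sum_upd) auto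
  moreover have "sum (f(p := f p + c)) A = sum f A - f p + (f p + c)" using a by (intro sum_upd) auto
  moreover have "(f(p := f p + c)) q = f q" using a by simp
  ultimately show ?thesis by (simp del: fun_upd_apply)
qed

definition weight :: "nat \<Rightarrow> crys \<Rightarrow> int" where
  "weight n b = (\<Sum>i=1..n. xs b i) + (\<Sum>i=1..n. xbs b i) + x0 b"

lemma Bcrys_iff: "b \<in> Bcrys n l \<longleftrightarrow> (\<forall>i. xs b i \<ge> 0 \<and> xbs b i \<ge> 0)
      \<and> (\<forall>i. (i = 0 \<or> i > n) \<longrightarrow> xs b i = 0 \<and> xbs b i = 0)
      \<and> x0 b \<in> {0, 1} \<and> weight n b = int l"
  unfolding Bcrys_def weight_def by (simp add: sum.distrib)

definition Reach :: "nat \<Rightarrow> nat \<Rightarrow> nat \<Rightarrow> crys set \<Rightarrow> crys set" where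
  "Reach n l i S = {b'. \<exists>b \<in> S. \<exists>k. fpow n l i k b = Some b'}"

lemma Bset_Suc: "Bset n l j (Suc a) = Reach n l (idx n j (Suc a)) (Bset n l j a)"
  by (simp add: Reach_def)

lemma Reach_eq:
  fixes mu :: "crys \<Rightarrow> nat"
  assumes sub: "S \<subseteq> S'"
    and clos: "\<And>b b'. b \<in> S' \<Longrightarrow> ftil n l i b = Some b' \<Longrightarrow> b' \<in> S'"
    and pred: "\<And>t. t \<in> S' \<Longrightarrow> t \<notin> S \<Longrightarrow> \<exists>t'\<in>S'. ftil n l i t' = Some t \<and> mu t' < mu t"
  shows "Reach n l i S = S'"
proof
  show "Reach n l i S \<subseteq> S'"
  proof
    fix b' assume "b' \<in> Reach n l i S"
    then obtain b k where b: "b \<in> S" "fpow n l i k b = Some b'" unfolding Reach_def by blast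
    have "\<forall>c. fpow n l i k b = Some c \<longrightarrow> c \<in> S'"
    proof (induction k)
      case 0 then show ?case using b sub by auto
    next
      case (Suc k) then show ?case using clos by (auto split: option.splits)
    qed
    then show "b' \<in> S'" using b by blast
  qed
next
  show "S' \<subseteq> Reach n l i S"
  proof
    fix t assume "t \<in> S'"
    then show "t \<in> Reach n l i S"
    proof (induction "mu t" arbitrary: t rule: less_induct)
      case less
      show ?case
      proof (cases "t \<in> S")
        case True
        then show ?thesis unfolding Reach_def by (auto intro!: bexI[of _ t] exI[of _ 0])
      next
        case False
        then obtain t' where t': "t' \<in> S'" "ftil n l i t' = Some t" "mu t' < mu t"
          using pred less.prems by blast
        then have "t' \<in> Reach n l i S" using less by blast
        then obtain b k where "b \<in> S" "fpow n l i k b = Some t'" unfolding Reach_def by blast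
        then have "fpow n l i (Suc k) b = Some t" using t' by simp
        then show ?thesis using \<open>b \<in> S\<close> unfolding Reach_def by blast
      qed
    qed
  qed
qed

definition Supp :: "nat \<Rightarrow> nat \<Rightarrow> nat set \<Rightarrow> bool \<Rightarrow> nat set \<Rightarrow> crys set" where
  "Supp n l X z Y = {b \<in> Bcrys n l. (\<forall>i. xs b i \<noteq> 0 \<longrightarrow> i \<in> X) \<and> (\<not> z \<longrightarrow> x0 b = 0)
       \<and> (\<forall>i. xbs b i \<noteq> 0 \<longrightarrow> i \<in> Y)}"

lemma fraw_mid: "1 \<le> i \<Longrightarrow> i < n \<Longrightarrow> fraw n i b =
   (if xs b (i+1) \<ge> xbs b (i+1) then Cr ((xs b)(i := xs b i - 1, i+1 := xs b (i+1) + 1)) (x0 b) (xbs b)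
    else Cr (xs b) (x0 b) ((xbs b)(i+1 := xbs b (i+1) - 1, i := xbs b i + 1)))"
  unfolding fraw_def Let_def by simp

lemma fraw_zero: "fraw n 0 b =
   (if xs b 2 \<ge> xbs b 2 then Cr ((xs b)(2 := xs b 2 + 1)) (x0 b) ((xbs b)(1 := xbs b 1 - 1))
    else Cr ((xs b)(1 := xs b 1 + 1)) (x0 b) ((xbs b)(2 := xbs b 2 - 1)))"
  unfolding fraw_def Let_def by simp

lemma fraw_n: "1 \<le> n \<Longrightarrow> fraw n n b =
   (if x0 b = 0 then Cr ((xs b)(n := xs b n - 1)) (x0 b + 1) (xbs b)
    else Cr (xs b) (x0 b - 1) ((xbs b)(n := xbs b n + 1)))"
  unfolding fraw_def Let_def by simp

lemma ftil_Some: "ftil n l i b = Some b' \<longleftrightarrow> i \<le> n \<and> fraw n i b \<in> Bcrys n l \<and> b' = fraw n i b"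
  unfolding ftil_def by auto

lemma Reach_mid:
  assumes i: "1 \<le> i" "i < n" and X: "i \<in> X" and Y: "i \<notin> Y" "i+1 \<in> Y \<longrightarrow> i+1 \<in> X"
  shows "Reach n l i (Supp n l X z Y) = Supp n l (insert (i+1) X) z (if i+1 \<in> Y then insert i Y else Y)"
    (is "_ = Supp n l ?X z ?Y")
proof (rule Reach_eq[where mu = "\<lambda>t. nat (xbs t i + xs t (i+1))"])
  show "Supp n l X z Y \<subseteq> Supp n l ?X z ?Y" unfolding Supp_def by auto
next
  fix b b' assume b: "b \<in> Supp n l ?X z ?Y" and f: "ftil n l i b = Some b'"
  then have b': "b' = fraw n i b" "b' \<in> Bcrys n l" by (auto simp: ftil_Some)
  show "b' \<in> Supp n l ?X z ?Y"
  proof (cases "xs b (i+1) \<ge> xbs b (i+1)")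
    case True
    then show ?thesis using b b' i X unfolding Supp_def by (auto simp: fraw_mid)
  next
    case False
    have "xs b (i+1) \<ge> 0" using b unfolding Supp_def Bcrys_def by auto
    then have "xbs b (i+1) \<noteq> 0" using False by auto
    then have "i+1 \<in> Y" using b unfolding Supp_def by (auto split: if_splits)
    then show ?thesis using False b b' i X unfolding Supp_def by (auto simp: fraw_mid)
  qed
next
  fix t assume t: "t \<in> Supp n l ?X z ?Y" and tn: "t \<notin> Supp n l X z Y"
  have tB: "t \<in> Bcrys n l" using t unfolding Supp_def by auto
  have nn: "\<And>k. xs t k \<ge> 0" "\<And>k. xbs t k \<ge> 0" using tB unfolding Bcrys_def by auto
  have bad: "(xs t (i+1) \<noteq> 0 \<and> i+1 \<notin> X) \<or> xbs t i \<noteq> 0"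
    using t tn i Y unfolding Supp_def by (auto split: if_splits)
  show "\<exists>t'\<in>Supp n l ?X z ?Y. ftil n l i t' = Some t \<and> nat (xbs t' i + xs t' (i+1)) < nat (xbs t i + xs t (i+1))"
  proof (cases "xs t (i+1) > xbs t (i+1)")
    case True
    define t' where "t' = Cr ((xs t)(i := xs t i + 1, i+1 := xs t (i+1) - 1)) (x0 t) (xbs t)"
    have ft: "fraw n i t' = t" using True i unfolding t'_def by (simp add: fraw_mid crys.expand fun_eq_iff)
    have w: "weight n t' = weight n t" using i unfolding t'_def weight_def by (simp del: fun_upd_apply add: sum_upd2)
    have "xs t (i+1) > 0" using True nn(2)[of "i+1"] by linarith
    then have t'B: "t' \<in> Bcrys n l" using tB w i unfolding Bcrys_iff t'_def by (auto simp: nn)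
    have "t' \<in> Supp n l ?X z ?Y" using t'B t X unfolding Supp_def t'_def by auto
    moreover have "ftil n l i t' = Some t" using ft tB i by (simp add: ftil_Some)
    moreover have "nat (xbs t' i + xs t' (i+1)) < nat (xbs t i + xs t (i+1))"
      using True nn[of i] nn[of "i+1"] unfolding t'_def by simp
    ultimately show ?thesis by blast
  next
    case False
    have xi: "xbs t i > 0"
    proof (rule ccontr)
      assume "\<not> xbs t i > 0"
      then have "xs t (i+1) \<noteq> 0" "i+1 \<notin> X" using bad nn[of i] by auto
      then have "xbs t (i+1) \<noteq> 0" using False nn[of "i+1"] by auto
      then have "i+1 \<in> ?Y" using t unfolding Supp_def by auto
      then show False using Y \<open>i+1 \<notin> X\<close> by (auto split: if_splits)
    qed
    then have "i \<in> ?Y" using t unfolding Supp_def by auto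
    then have iY: "i+1 \<in> Y" using Y by (auto split: if_splits)
    define t' where "t' = Cr (xs t) (x0 t) ((xbs t)(i+1 := xbs t (i+1) + 1, i := xbs t i - 1))"
    have ft: "fraw n i t' = t" using False i unfolding t'_def by (simp add: fraw_mid crys.expand fun_eq_iff)
    have w: "weight n t' = weight n t" using i unfolding t'_def weight_def by (simp del: fun_upd_apply add: sum_upd2)
    have t'B: "t' \<in> Bcrys n l" using tB w i xi nn[of "i+1"] unfolding Bcrys_iff t'_def by (auto simp: nn)
    have "t' \<in> Supp n l ?X z ?Y" using t'B t iY unfolding Supp_def t'_def by auto
    moreover have "ftil n l i t' = Some t" using ft tB i by (simp add: ftil_Some)
    moreover have "nat (xbs t' i + xs t' (i+1)) < nat (xbs t i + xs t (i+1))"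
      using xi nn[of i] nn[of "i+1"] unfolding t'_def by simp
    ultimately show ?thesis by blast
  qed
qed

lemma Reach_zero:
  assumes n: "2 \<le> n" and Y: "1 \<in> Y" "1 \<notin> X" "2 \<in> Y \<longrightarrow> 2 \<in> X"
  shows "Reach n l 0 (Supp n l X z Y) = Supp n l (if 2 \<in> Y then insert 1 (insert 2 X) else insert 2 X) z Y"
    (is "_ = Supp n l ?X z Y")
proof (rule Reach_eq[where mu = "\<lambda>t. nat (xs t 1 + xs t 2)"])
  show "Supp n l X z Y \<subseteq> Supp n l ?X z Y" unfolding Supp_def by auto
next
  fix b b' assume b: "b \<in> Supp n l ?X z Y" and f: "ftil n l 0 b = Some b'"
  then have b': "b' = fraw n 0 b" "b' \<in> Bcrys n l" by (auto simp: ftil_Some)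
  show "b' \<in> Supp n l ?X z Y"
  proof (cases "xs b 2 \<ge> xbs b 2")
    case True
    then show ?thesis using b b' Y unfolding Supp_def by (auto simp: fraw_zero)
  next
    case False
    have "xs b 2 \<ge> 0" using b unfolding Supp_def Bcrys_def by auto
    then have "xbs b 2 \<noteq> 0" using False by auto
    then have "2 \<in> Y" using b unfolding Supp_def by (auto split: if_splits)
    then show ?thesis using False b b' Y unfolding Supp_def by (auto simp: fraw_zero)
  qed
next
  fix t assume t: "t \<in> Supp n l ?X z Y" and tn: "t \<notin> Supp n l X z Y"
  have tB: "t \<in> Bcrys n l" using t unfolding Supp_def by auto
  have nn: "\<And>k. xs t k \<ge> 0" "\<And>k. xbs t k \<ge> 0" using tB unfolding Bcrys_def by auto
  have bad: "(xs t 2 \<noteq> 0 \<and> 2 \<notin> X) \<or> xs t 1 \<noteq> 0"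
    using t tn Y unfolding Supp_def by (auto split: if_splits)
  show "\<exists>t'\<in>Supp n l ?X z Y. ftil n l 0 t' = Some t \<and> nat (xs t' 1 + xs t' 2) < nat (xs t 1 + xs t 2)"
  proof (cases "xs t 2 > xbs t 2")
    case True
    define t' where "t' = Cr ((xs t)(2 := xs t 2 - 1)) (x0 t) ((xbs t)(1 := xbs t 1 + 1))"
    have ft: "fraw n 0 t' = t" using True unfolding t'_def by (simp add: fraw_zero crys.expand fun_eq_iff)
    have s1: "sum ((xs t)(2 := xs t 2 - 1)) {1..n} = sum (xs t) {1..n} - 1" using n by (simp del: fun_upd_apply add: sum_upd)
    have s2: "sum ((xbs t)(1 := xbs t 1 + 1)) {1..n} = sum (xbs t) {1..n} + 1" using n by (simp del: fun_upd_apply add: sum_upd)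
    have w: "weight n t' = weight n t" unfolding t'_def weight_def using s1 s2 by simp
    have "xs t 2 > 0" using True nn(2)[of 2] by linarith
    then have t'B: "t' \<in> Bcrys n l" using tB w n unfolding Bcrys_iff t'_def by (auto simp: nn)
    have "t' \<in> Supp n l ?X z Y" using t'B t Y unfolding Supp_def t'_def by auto
    moreover have "ftil n l 0 t' = Some t" using ft tB by (simp add: ftil_Some)
    moreover have "nat (xs t' 1 + xs t' 2) < nat (xs t 1 + xs t 2)"
      using True nn(1)[of 1] nn(2)[of 2] unfolding t'_def by simp
    ultimately show ?thesis by blast
  next
    case False
    have x1: "xs t 1 > 0"
    proof (rule ccontr)
      assume "\<not> xs t 1 > 0"
      then have "xs t 2 \<noteq> 0" "2 \<notin> X" using bad nn(1)[of 1] by auto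
      then have "xbs t 2 \<noteq> 0" using False nn(1)[of 2] by auto
      then have "2 \<in> Y" using t unfolding Supp_def by auto
      then show False using Y \<open>2 \<notin> X\<close> by auto
    qed
    then have "1 \<in> ?X" using t unfolding Supp_def by auto
    then have iY: "2 \<in> Y" using Y by (auto split: if_splits)
    define t' where "t' = Cr ((xs t)(1 := xs t 1 - 1)) (x0 t) ((xbs t)(2 := xbs t 2 + 1))"
    have ft: "fraw n 0 t' = t" using False unfolding t'_def by (simp add: fraw_zero crys.expand fun_eq_iff)
    have s1: "sum ((xs t)(1 := xs t 1 - 1)) {1..n} = sum (xs t) {1..n} - 1" using n by (simp del: fun_upd_apply add: sum_upd)
    have s2: "sum ((xbs t)(2 := xbs t 2 + 1)) {1..n} = sum (xbs t) {1..n} + 1" using n by (simp del: fun_upd_apply add: sum_upd)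
    have w: "weight n t' = weight n t" unfolding t'_def weight_def using s1 s2 by simp
    have t'B: "t' \<in> Bcrys n l" using tB w n x1 unfolding Bcrys_iff t'_def by (auto simp: nn)
    have "t' \<in> Supp n l ?X z Y" using t'B t iY unfolding Supp_def t'_def by auto
    moreover have "ftil n l 0 t' = Some t" using ft tB by (simp add: ftil_Some)
    moreover have "nat (xs t' 1 + xs t' 2) < nat (xs t 1 + xs t 2)"
      using x1 nn(1)[of 2] unfolding t'_def by simp
    ultimately show ?thesis by blast
  qed
qed

lemma Reach_n:
  assumes n: "2 \<le> n" and X: "n \<in> X" and Y: "n \<notin> Y"
  shows "Reach n l n (Supp n l X False Y) = Supp n l X True (insert n Y)"
proof (rule Reach_eq[where mu = "\<lambda>t. nat (x0 t + 2 * xbs t n)"])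
  show "Supp n l X False Y \<subseteq> Supp n l X True (insert n Y)" unfolding Supp_def by auto
next
  fix b b' assume b: "b \<in> Supp n l X True (insert n Y)" and f: "ftil n l n b = Some b'"
  then have b': "b' = fraw n n b" "b' \<in> Bcrys n l" by (auto simp: ftil_Some)
  show "b' \<in> Supp n l X True (insert n Y)"
    using b b' X n unfolding Supp_def by (auto simp: fraw_n)
next
  fix t assume t: "t \<in> Supp n l X True (insert n Y)" and tn: "t \<notin> Supp n l X False Y"
  have tB: "t \<in> Bcrys n l" using t unfolding Supp_def by auto
  have nn: "\<And>k. xs t k \<ge> 0" "\<And>k. xbs t k \<ge> 0" "x0 t \<in> {0,1}" using tB unfolding Bcrys_def by auto
  have bad: "x0 t \<noteq> 0 \<or> xbs t n \<noteq> 0"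
    using t tn unfolding Supp_def by auto
  show "\<exists>t'\<in>Supp n l X True (insert n Y). ftil n l n t' = Some t \<and> nat (x0 t' + 2 * xbs t' n) < nat (x0 t + 2 * xbs t n)"
  proof (cases "x0 t = 1")
    case True
    define t' where "t' = Cr ((xs t)(n := xs t n + 1)) 0 (xbs t)"
    have ft: "fraw n n t' = t" using True n unfolding t'_def by (simp add: fraw_n crys.expand fun_eq_iff)
    have s1: "sum ((xs t)(n := xs t n + 1)) {1..n} = sum (xs t) {1..n} + 1" using n by (simp del: fun_upd_apply add: sum_upd)
    have w: "weight n t' = weight n t" unfolding t'_def weight_def using s1 True by simp
    have t'B: "t' \<in> Bcrys n l" using tB w n unfolding Bcrys_iff t'_def by (auto simp: nn)
    have "t' \<in> Supp n l X True (insert n Y)" using t'B t X unfolding Supp_def t'_def by auto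
    moreover have "ftil n l n t' = Some t" using ft tB n by (simp add: ftil_Some)
    moreover have "nat (x0 t' + 2 * xbs t' n) < nat (x0 t + 2 * xbs t n)"
      using True nn(2)[of n] unfolding t'_def by simp
    ultimately show ?thesis by blast
  next
    case False
    then have z: "x0 t = 0" using nn(3) by auto
    then have xn: "xbs t n > 0" using bad nn(2)[of n] by auto
    define t' where "t' = Cr (xs t) 1 ((xbs t)(n := xbs t n - 1))"
    have ft: "fraw n n t' = t" using z n unfolding t'_def by (simp add: fraw_n crys.expand fun_eq_iff)
    have s1: "sum ((xbs t)(n := xbs t n - 1)) {1..n} = sum (xbs t) {1..n} - 1" using n by (simp del: fun_upd_apply add: sum_upd)
    have w: "weight n t' = weight n t" unfolding t'_def weight_def using s1 z by simp
    have t'B: "t' \<in> Bcrys n l" using tB w n xn unfolding Bcrys_iff t'_def by (auto simp: nn)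
    have "t' \<in> Supp n l X True (insert n Y)" using t'B t unfolding Supp_def t'_def by auto
    moreover have "ftil n l n t' = Some t" using ft tB n by (simp add: ftil_Some)
    moreover have "nat (x0 t' + 2 * xbs t' n) < nat (x0 t + 2 * xbs t n)"
      using z xn unfolding t'_def by simp
    ultimately show ?thesis by blast
  qed
qed



lemma eps_odd: "odd j \<Longrightarrow> eps (Suc j) = 0" by (simp add: eps_def)
lemma eps_even: "even j \<Longrightarrow> eps (Suc j) = 1" by (simp add: eps_def)

lemma idx_1: "idx n j 1 = eps (j+1)" by (simp add: idx_def)
lemma idx_1': "idx n j (Suc 0) = eps (j+1)" by (simp add: idx_def)
lemma idx_first: "2 \<le> n \<Longrightarrow> 2 \<le> a \<Longrightarrow> a \<le> n \<Longrightarrow> idx n j a = a" unfolding idx_def by auto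
lemma idx_second: "n < a \<Longrightarrow> a < 2*n-1 \<Longrightarrow> idx n j a = 2*n - a" unfolding idx_def by auto
lemma idx_last: "idx n j (2*n-1) = eps (j+1)" by (simp add: idx_def)

lemma sum_delta1: "p \<in> {1..(n::nat)} \<Longrightarrow> sum ((\<lambda>_. 0)(p := v)) {1..n} = (v::int)"
  by (subst sum_upd) auto

lemma Bcrys_rng1: "b \<in> Bcrys n l \<Longrightarrow> xs b i \<noteq> 0 \<Longrightarrow> 1 \<le> i \<and> i \<le> n"
proof -
  assume b: "b \<in> Bcrys n l" and x: "xs b i \<noteq> 0"
  have "(i = 0 \<or> i > n) \<longrightarrow> xs b i = 0" using b unfolding Bcrys_def by blast
  then show ?thesis using x by linarith
qed

lemma Bcrys_rng2: "b \<in> Bcrys n l \<Longrightarrow> xbs b i \<noteq> 0 \<Longrightarrow> 1 \<le> i \<and> i \<le> n"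
proof -
  assume b: "b \<in> Bcrys n l" and x: "xbs b i \<noteq> 0"
  have "(i = 0 \<or> i > n) \<longrightarrow> xbs b i = 0" using b unfolding Bcrys_def by blast
  then show ?thesis using x by linarith
qed

lemma Supp_all: "Supp n l {1..n} True {1..n} = Bcrys n l"
  unfolding Supp_def using Bcrys_rng1 Bcrys_rng2 by auto

lemma ground_odd: "odd j \<Longrightarrow> 1 \<le> n \<Longrightarrow> {ground l j} = Supp n l {} False {1}"
proof -
  assume j: "odd j" and n: "1 \<le> n"
  have g: "ground l j = Cr (\<lambda>_. 0) 0 ((\<lambda>_. 0)(1 := int l))" using j by (simp add: ground_def)
  show ?thesis
  proof
    show "{ground l j} \<subseteq> Supp n l {} False {1}"
      using n unfolding g Supp_def Bcrys_iff weight_def by (auto simp: sum_delta1)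
    show "Supp n l {} False {1} \<subseteq> {ground l j}"
    proof
      fix b assume b: "b \<in> Supp n l {} False {1}"
      have xs: "xs b = (\<lambda>_. 0)" "x0 b = 0" and xb: "xbs b = (\<lambda>_. 0)(1 := xbs b 1)"
        using b unfolding Supp_def by (auto simp: fun_eq_iff)
      have "weight n b = int l" using b unfolding Supp_def Bcrys_iff by auto
      moreover have "sum ((\<lambda>_. 0)(1 := xbs b 1)) {1..n} = xbs b 1" by (rule sum_delta1) (use n in auto)
      ultimately have "xbs b 1 = int l" unfolding weight_def xs
        by (subst (asm) xb) (simp del: fun_upd_apply)
      then show "b \<in> {ground l j}" using xs xb g by (cases b) auto
    qed
  qed
qed

lemma ground_even: "even j \<Longrightarrow> 1 \<le> n \<Longrightarrow> {ground l j} = Supp n l {1} False {}"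
proof -
  assume j: "even j" and n: "1 \<le> n"
  have g: "ground l j = Cr ((\<lambda>_. 0)(1 := int l)) 0 (\<lambda>_. 0)" using j by (simp add: ground_def)
  show ?thesis
  proof
    show "{ground l j} \<subseteq> Supp n l {1} False {}"
      using n unfolding g Supp_def Bcrys_iff weight_def by (auto simp: sum_delta1)
    show "Supp n l {1} False {} \<subseteq> {ground l j}"
    proof
      fix b assume b: "b \<in> Supp n l {1} False {}"
      have xs: "xbs b = (\<lambda>_. 0)" "x0 b = 0" and xb: "xs b = (\<lambda>_. 0)(1 := xs b 1)"
        using b unfolding Supp_def by (auto simp: fun_eq_iff)
      have "weight n b = int l" using b unfolding Supp_def Bcrys_iff by auto
      moreover have "sum ((\<lambda>_. 0)(1 := xs b 1)) {1..n} = xs b 1" by (rule sum_delta1) (use n in auto)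
      ultimately have "xs b 1 = int l" unfolding weight_def xs
        by (subst (asm) xb) (simp del: fun_upd_apply)
      then show "b \<in> {ground l j}" using xs xb g by (cases b) auto
    qed
  qed
qed

lemma odd_first: "odd j \<Longrightarrow> 3 \<le> n \<Longrightarrow> 1 \<le> a \<Longrightarrow> a \<le> n-1 \<Longrightarrow>
   Bset n l j a = Supp n l {2..a+1} False {1}"
proof (induction a)
  case 0 then show ?case by simp
next
  case (Suc a)
  show ?case
  proof (cases "a = 0")
    case True
    have "Bset n l j 0 = Supp n l {} False {1}" using Suc.prems ground_odd[of j n l] by simp
    then have "Bset n l j (Suc a) = Reach n l 0 (Supp n l {} False {1})"
      using Suc.prems True by (simp add: Bset_Suc idx_1' eps_odd del: Bset.simps)
    also have "\<dots> = Supp n l {2} False {1}" using Suc.prems by (subst Reach_zero) auto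
    finally show ?thesis using True by (simp add: numeral_2_eq_2)
  next
    case False
    have "Bset n l j (Suc a) = Reach n l (Suc a) (Supp n l {2..a+1} False {1})"
      using Suc False by (simp add: Bset_Suc idx_first del: Bset.simps)
    also have "\<dots> = Supp n l {2..Suc a+1} False {1}" using Suc.prems False
      by (subst Reach_mid) (auto simp: atLeastAtMostSuc_conv)
    finally show ?thesis .
  qed
qed

lemma odd_second: "odd j \<Longrightarrow> 3 \<le> n \<Longrightarrow> 1 \<le> k \<Longrightarrow> k \<le> n-1 \<Longrightarrow>
   Bset n l j (n+k-1) = Supp n l {2..n} True (insert 1 {n-k+1..n})"
proof (induction k)
  case 0 then show ?case by simp
next
  case (Suc k)
  show ?case
  proof (cases "k = 0")
    case True
    have b: "Bset n l j (n-1) = Supp n l {2..n} False {1}" using odd_first[of j n "n-1" l] Suc.prems by simp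
    have e: "Suc (n-1) = n" using Suc.prems by simp
    have "Bset n l j (Suc (n-1)) = Reach n l (idx n j (Suc (n-1))) (Bset n l j (n-1))" by (rule Bset_Suc)
    then have "Bset n l j n = Reach n l n (Supp n l {2..n} False {1})"
      unfolding e b using Suc.prems idx_first[of n n j] by simp
    also have "\<dots> = Supp n l {2..n} True (insert n {1})" using Suc.prems by (intro Reach_n) auto
    also have "insert n {1} = insert 1 {n - Suc k + 1..n}" using True Suc.prems by auto
    finally show ?thesis using True by simp
  next
    case False
    have e: "Suc (n+k-1) = n + Suc k - 1" using False by simp
    have i: "idx n j (n + Suc k - 1) = n - k" using Suc.prems False by (subst idx_second) auto
    have "Bset n l j (Suc (n+k-1)) = Reach n l (idx n j (Suc (n+k-1))) (Bset n l j (n+k-1))" by (rule Bset_Suc)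
    then have "Bset n l j (n + Suc k - 1) = Reach n l (n-k) (Supp n l {2..n} True (insert 1 {n-k+1..n}))"
      using Suc False unfolding e i by simp
    also have "\<dots> = Supp n l (insert (n-k+1) {2..n}) True (if n-k+1 \<in> insert 1 {n-k+1..n} then insert (n-k) (insert 1 {n-k+1..n}) else insert 1 {n-k+1..n})"
      using Suc.prems False by (intro Reach_mid) auto
    also have "\<dots> = Supp n l {2..n} True (insert 1 {n - Suc k + 1..n})"
    proof -
      have "insert (n-k+1) {2..n} = {2..n}" using Suc.prems False by auto
      moreover have "(if n-k+1 \<in> insert 1 {n-k+1..n} then insert (n-k) (insert 1 {n-k+1..n}) else insert 1 {n-k+1..n}) = insert 1 {n - Suc k + 1..n}"
        using Suc.prems False by auto
      ultimately show ?thesis by simp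
    qed
    finally show ?thesis .
  qed
qed


lemma odd_last: "odd j \<Longrightarrow> 3 \<le> n \<Longrightarrow> Bset n l j (2*n-1) = Bcrys n l"
proof -
  assume j: "odd j" and n: "3 \<le> n"
  have b: "Bset n l j (n+(n-1)-1) = Supp n l {2..n} True (insert 1 {n-(n-1)+1..n})"
    using odd_second[of j n "n-1" l] j n by simp
  have e: "Suc (n+(n-1)-1) = 2*n-1" using n by simp
  have e2: "n-(n-1)+1 = 2" using n by simp
  have "Bset n l j (Suc (n+(n-1)-1)) = Reach n l (idx n j (Suc (n+(n-1)-1))) (Bset n l j (n+(n-1)-1))" by (rule Bset_Suc)
  then have "Bset n l j (2*n-1) = Reach n l 0 (Supp n l {2..n} True (insert 1 {2..n}))"
    unfolding e b e2 idx_last using eps_odd[OF j] by simp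
  also have "\<dots> = Supp n l (if 2 \<in> insert 1 {2..n} then insert 1 (insert 2 {2..n}) else insert 2 {2..n}) True (insert 1 {2..n})"
    using n by (intro Reach_zero) auto
  also have "\<dots> = Supp n l {1..n} True {1..n}"
  proof -
    have "(if 2 \<in> insert 1 {2..n} then insert 1 (insert 2 {2..n}) else insert 2 {2..n}) = {1..n}" "insert 1 {2..n} = {1..n}" using n by auto
    then show ?thesis by simp
  qed
  finally show ?thesis using Supp_all by simp
qed

lemma even_first: "even j \<Longrightarrow> 3 \<le> n \<Longrightarrow> 1 \<le> a \<Longrightarrow> a \<le> n-1 \<Longrightarrow>
   Bset n l j a = Supp n l {1..a+1} False {}"
proof (induction a)
  case 0 then show ?case by simp
next
  case (Suc a)
  show ?case
  proof (cases "a = 0")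
    case True
    have "Bset n l j 0 = Supp n l {1} False {}" using Suc.prems ground_even[of j n l] by simp
    then have "Bset n l j (Suc a) = Reach n l 1 (Supp n l {1} False {})"
      using Suc.prems True by (simp add: Bset_Suc idx_1' eps_even del: Bset.simps)
    also have "\<dots> = Supp n l (insert (1+1) {1}) False (if 1+1 \<in> {} then insert 1 {} else {})"
      using Reach_mid[of 1 n "{1}" "{}" l False] Suc.prems by simp
    also have "(insert (1+1) {1::nat}) = {1..Suc a+1}" using True by auto
    finally show ?thesis by simp
  next
    case False
    have "Bset n l j (Suc a) = Reach n l (Suc a) (Supp n l {1..a+1} False {})"
      using Suc False by (simp add: Bset_Suc idx_first del: Bset.simps)
    also have "\<dots> = Supp n l (insert (Suc a+1) {1..a+1}) False (if Suc a + 1 \<in> {} then insert (Suc a) {} else {})" using Suc.prems False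
      by (intro Reach_mid) auto
    also have "insert (Suc a+1) {1..a+1} = {1..Suc a+1}" by auto
    finally show ?thesis by simp
  qed
qed

lemma even_second: "even j \<Longrightarrow> 3 \<le> n \<Longrightarrow> 1 \<le> k \<Longrightarrow> k \<le> n-1 \<Longrightarrow>
   Bset n l j (n+k-1) = Supp n l {1..n} True {n-k+1..n}"
proof (induction k)
  case 0 then show ?case by simp
next
  case (Suc k)
  show ?case
  proof (cases "k = 0")
    case True
    have b: "Bset n l j (n-1) = Supp n l {1..n} False {}" using even_first[of j n "n-1" l] Suc.prems by simp
    have e: "Suc (n-1) = n" using Suc.prems by simp
    have "Bset n l j (Suc (n-1)) = Reach n l (idx n j (Suc (n-1))) (Bset n l j (n-1))" by (rule Bset_Suc)
    then have "Bset n l j n = Reach n l n (Supp n l {1..n} False {})"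
      unfolding e b using Suc.prems idx_first[of n n j] by simp
    also have "\<dots> = Supp n l {1..n} True (insert n {})" using Suc.prems by (intro Reach_n) auto
    also have "insert n {} = {n - Suc k + 1..n}" using True Suc.prems by auto
    finally show ?thesis using True by simp
  next
    case False
    have e: "Suc (n+k-1) = n + Suc k - 1" using False by simp
    have i: "idx n j (n + Suc k - 1) = n - k" using Suc.prems False by (subst idx_second) auto
    have "Bset n l j (Suc (n+k-1)) = Reach n l (idx n j (Suc (n+k-1))) (Bset n l j (n+k-1))" by (rule Bset_Suc)
    then have "Bset n l j (n + Suc k - 1) = Reach n l (n-k) (Supp n l {1..n} True {n-k+1..n})"
      using Suc False unfolding e i by simp
    also have "\<dots> = Supp n l (insert (n-k+1) {1..n}) True (if n-k+1 \<in> {n-k+1..n} then insert (n-k) {n-k+1..n} else {n-k+1..n})"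
      using Suc.prems False by (intro Reach_mid) auto
    also have "\<dots> = Supp n l {1..n} True {n - Suc k + 1..n}"
    proof -
      have "insert (n-k+1) {1..n} = {1..n}" using Suc.prems False by auto
      moreover have "(if n-k+1 \<in> {n-k+1..n} then insert (n-k) {n-k+1..n} else {n-k+1..n}) = {n - Suc k + 1..n}"
        using Suc.prems False by auto
      ultimately show ?thesis by simp
    qed
    finally show ?thesis .
  qed
qed

lemma even_last: "even j \<Longrightarrow> 3 \<le> n \<Longrightarrow> Bset n l j (2*n-1) = Bcrys n l"
proof -
  assume j: "even j" and n: "3 \<le> n"
  have b: "Bset n l j (n+(n-1)-1) = Supp n l {1..n} True {n-(n-1)+1..n}"
    using even_second[of j n "n-1" l] j n by simp
  have e: "Suc (n+(n-1)-1) = 2*n-1" using n by simp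
  have e2: "n-(n-1)+1 = 2" using n by simp
  have "Bset n l j (Suc (n+(n-1)-1)) = Reach n l (idx n j (Suc (n+(n-1)-1))) (Bset n l j (n+(n-1)-1))" by (rule Bset_Suc)
  then have "Bset n l j (2*n-1) = Reach n l 1 (Supp n l {1..n} True {2..n})"
    unfolding e b e2 idx_last using eps_even[OF j] by simp
  also have "\<dots> = Supp n l (insert (1+1) {1..n}) True (if 1+1 \<in> {2..n} then insert 1 {2..n} else {2..n})"
    using n by (intro Reach_mid) auto
  also have "\<dots> = Supp n l {1..n} True {1..n}"
  proof -
    have "insert (1+1) {1..n} = {1..n}" "(if 1+1 \<in> {2..n} then insert 1 {2..n} else {2..n}) = {1..n}" using n by auto
    then show ?thesis by simp
  qed
  finally show ?thesis using Supp_all by simp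
qed



lemma fpow_chain: "(\<And>k. k < m \<Longrightarrow> ftil n l i (g k) = Some (g (Suc k))) \<Longrightarrow> fpow n l i m (g 0) = Some (g m)"
  by (induction m) auto

lemma fpow_chain2: "(\<And>k. k < m \<Longrightarrow> ftil n l i (g k) = Some (h k)) \<Longrightarrow>
   (\<And>k. k < m \<Longrightarrow> ftil n l i (h k) = Some (g (Suc k))) \<Longrightarrow> fpow n l i (2*m) (g 0) = Some (g m)"
proof (induction m)
  case 0 then show ?case by simp
next
  case (Suc m)
  have "fpow n l i (2*m) (g 0) = Some (g m)" using Suc by auto
  then show ?case using Suc.prems[of m] by simp
qed

lemma sum_two: "p \<in> {1..(n::nat)} \<Longrightarrow> q \<in> {1..n} \<Longrightarrow> p \<noteq> q \<Longrightarrow>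
   sum ((\<lambda>_. 0)(p := u, q := v)) {1..n} = (u::int) + v"
proof -
  assume a: "p \<in> {1..n}" "q \<in> {1..n}" "p \<noteq> q"
  have "sum ((\<lambda>_. 0)(p := u, q := v)) {1..n} = sum ((\<lambda>_. 0)(p := u)) {1..n} - ((\<lambda>_. 0)(p := u)) q + v"
    using a by (intro sum_upd) auto
  moreover have "sum ((\<lambda>_. 0)(p := u)) {1..n} = u" using a by (intro sum_delta1) auto
  moreover have "((\<lambda>_. 0)(p := u)) q = (0::int)" using a by simp
  ultimately show ?thesis by (simp del: fun_upd_apply)
qed

lemma sum_delta1': "Suc 0 \<le> p \<Longrightarrow> p \<le> n \<Longrightarrow> sum ((\<lambda>_. 0)(p := v)) {Suc 0..(n::nat)} = (v::int)"
  using sum_delta1[of p n v] by simp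
lemma sum_two': "Suc 0 \<le> p \<Longrightarrow> p \<le> n \<Longrightarrow> Suc 0 \<le> q \<Longrightarrow> q \<le> n \<Longrightarrow> p \<noteq> q \<Longrightarrow>
   sum ((\<lambda>_. 0)(p := u, q := v)) {Suc 0..(n::nat)} = (u::int) + v"
  using sum_two[of p n q u v] by simp

lemma sum_zero: "sum (\<lambda>_. 0::int) A = 0" by simp

lemma move_x:
  assumes i: "1 \<le> i" "i < n"
  shows "fpow n l i l (Cr ((\<lambda>_. 0)(i := int l)) 0 (\<lambda>_. 0)) = Some (Cr ((\<lambda>_. 0)(i+1 := int l)) 0 (\<lambda>_. 0))"
proof -
  let ?g = "\<lambda>k::nat. Cr ((\<lambda>_. 0)(i := int l - int k, i+1 := int k)) 0 (\<lambda>_. 0)"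
  have "fpow n l i l (?g 0) = Some (?g l)"
  proof (rule fpow_chain)
    fix k assume k: "k < l"
    have f: "fraw n i (?g k) = ?g (Suc k)" using i by (simp add: fraw_mid fun_eq_iff)
    have w: "weight n (?g (Suc k)) = int l" using i unfolding weight_def by (simp add: sum_two' del: fun_upd_apply)
    have "?g (Suc k) \<in> Bcrys n l" unfolding Bcrys_iff using w i k by auto
    then show "ftil n l i (?g k) = Some (?g (Suc k))" using f i by (simp add: ftil_Some)
  qed
  moreover have "?g 0 = Cr ((\<lambda>_. 0)(i := int l)) 0 (\<lambda>_. 0)" by (simp add: fun_eq_iff)
  moreover have "?g l = Cr ((\<lambda>_. 0)(i+1 := int l)) 0 (\<lambda>_. 0)" by (simp add: fun_eq_iff)
  ultimately show ?thesis by simp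
qed

lemma move_xb:
  assumes i: "1 \<le> i" "i < n"
  shows "fpow n l i l (Cr (\<lambda>_. 0) 0 ((\<lambda>_. 0)(i+1 := int l))) = Some (Cr (\<lambda>_. 0) 0 ((\<lambda>_. 0)(i := int l)))"
proof -
  let ?g = "\<lambda>k::nat. Cr (\<lambda>_. 0) 0 ((\<lambda>_. 0)(i+1 := int l - int k, i := int k))"
  have "fpow n l i l (?g 0) = Some (?g l)"
  proof (rule fpow_chain)
    fix k assume k: "k < l"
    have f: "fraw n i (?g k) = ?g (Suc k)" using i k by (simp add: fraw_mid fun_eq_iff)
    have w: "weight n (?g (Suc k)) = int l" using i unfolding weight_def by (simp add: sum_two' del: fun_upd_apply)
    have "?g (Suc k) \<in> Bcrys n l" unfolding Bcrys_iff using w i k by auto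
    then show "ftil n l i (?g k) = Some (?g (Suc k))" using f i by (simp add: ftil_Some)
  qed
  moreover have "?g 0 = Cr (\<lambda>_. 0) 0 ((\<lambda>_. 0)(i+1 := int l))" by (simp add: fun_eq_iff)
  moreover have "?g l = Cr (\<lambda>_. 0) 0 ((\<lambda>_. 0)(i := int l))" by (simp add: fun_eq_iff)
  ultimately show ?thesis by simp
qed

lemma move_0a:
  assumes n: "2 \<le> n"
  shows "fpow n l 0 l (Cr (\<lambda>_. 0) 0 ((\<lambda>_. 0)(1 := int l))) = Some (Cr ((\<lambda>_. 0)(2 := int l)) 0 (\<lambda>_. 0))"
proof -
  let ?g = "\<lambda>k::nat. Cr ((\<lambda>_. 0)(2 := int k)) 0 ((\<lambda>_. 0)(1 := int l - int k))"
  have "fpow n l 0 l (?g 0) = Some (?g l)"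
  proof (rule fpow_chain)
    fix k assume k: "k < l"
    have f: "fraw n 0 (?g k) = ?g (Suc k)" by (simp add: fraw_zero fun_eq_iff)
    have w: "weight n (?g (Suc k)) = int l" using n unfolding weight_def by (simp add: sum_delta1' del: fun_upd_apply)
    have "?g (Suc k) \<in> Bcrys n l" unfolding Bcrys_iff using w n k by auto
    then show "ftil n l 0 (?g k) = Some (?g (Suc k))" using f by (simp add: ftil_Some)
  qed
  moreover have "?g 0 = Cr (\<lambda>_. 0) 0 ((\<lambda>_. 0)(1 := int l))" by (simp add: fun_eq_iff)
  moreover have "?g l = Cr ((\<lambda>_. 0)(2 := int l)) 0 (\<lambda>_. 0)" by (simp add: fun_eq_iff)
  ultimately show ?thesis by simp
qed

lemma move_0b:
  assumes n: "2 \<le> n"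
  shows "fpow n l 0 l (Cr (\<lambda>_. 0) 0 ((\<lambda>_. 0)(2 := int l))) = Some (Cr ((\<lambda>_. 0)(1 := int l)) 0 (\<lambda>_. 0))"
proof -
  let ?g = "\<lambda>k::nat. Cr ((\<lambda>_. 0)(1 := int k)) 0 ((\<lambda>_. 0)(2 := int l - int k))"
  have "fpow n l 0 l (?g 0) = Some (?g l)"
  proof (rule fpow_chain)
    fix k assume k: "k < l"
    have f: "fraw n 0 (?g k) = ?g (Suc k)" using k by (simp add: fraw_zero fun_eq_iff)
    have w: "weight n (?g (Suc k)) = int l" using n unfolding weight_def by (simp add: sum_delta1' del: fun_upd_apply)
    have "?g (Suc k) \<in> Bcrys n l" unfolding Bcrys_iff using w n k by auto
    then show "ftil n l 0 (?g k) = Some (?g (Suc k))" using f by (simp add: ftil_Some)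
  qed
  moreover have "?g 0 = Cr (\<lambda>_. 0) 0 ((\<lambda>_. 0)(2 := int l))" by (simp add: fun_eq_iff)
  moreover have "?g l = Cr ((\<lambda>_. 0)(1 := int l)) 0 (\<lambda>_. 0)" by (simp add: fun_eq_iff)
  ultimately show ?thesis by simp
qed

lemma move_n:
  assumes n: "2 \<le> n"
  shows "fpow n l n (2*l) (Cr ((\<lambda>_. 0)(n := int l)) 0 (\<lambda>_. 0)) = Some (Cr (\<lambda>_. 0) 0 ((\<lambda>_. 0)(n := int l)))"
proof -
  let ?g = "\<lambda>k::nat. Cr ((\<lambda>_. 0)(n := int l - int k)) 0 ((\<lambda>_. 0)(n := int k))"
  let ?h = "\<lambda>k::nat. Cr ((\<lambda>_. 0)(n := int l - int k - 1)) 1 ((\<lambda>_. 0)(n := int k))"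
  have "fpow n l n (2*l) (?g 0) = Some (?g l)"
  proof (rule fpow_chain2)
    fix k assume k: "k < l"
    have f: "fraw n n (?g k) = ?h k" using n by (simp add: fraw_n fun_eq_iff)
    have w: "weight n (?h k) = int l" using n unfolding weight_def by (simp add: sum_delta1' del: fun_upd_apply)
    have "?h k \<in> Bcrys n l" unfolding Bcrys_iff using w n k by auto
    then show "ftil n l n (?g k) = Some (?h k)" using f by (simp add: ftil_Some)
  next
    fix k assume k: "k < l"
    have f: "fraw n n (?h k) = ?g (Suc k)" using n by (simp add: fraw_n fun_eq_iff)
    have w: "weight n (?g (Suc k)) = int l" using n unfolding weight_def by (simp add: sum_delta1' del: fun_upd_apply)
    have "?g (Suc k) \<in> Bcrys n l" unfolding Bcrys_iff using w n k by auto
    then show "ftil n l n (?h k) = Some (?g (Suc k))" using f by (simp add: ftil_Some)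
  qed
  moreover have "?g 0 = Cr ((\<lambda>_. 0)(n := int l)) 0 (\<lambda>_. 0)" by (simp add: fun_eq_iff)
  moreover have "?g l = Cr (\<lambda>_. 0) 0 ((\<lambda>_. 0)(n := int l))" by (simp add: fun_eq_iff)
  ultimately show ?thesis by simp
qed



lemma bseq_Suc': "bseq n l j (Suc a) = the (fpow n l (idx n j (Suc a)) (nat (vphi n (idx n j (Suc a)) (bseq n l j a))) (bseq n l j a))"
  by simp

lemma bseq_first: "3 \<le> n \<Longrightarrow> 1 \<le> a \<Longrightarrow> a \<le> n-1 \<Longrightarrow> bseq n l j a = Cr ((\<lambda>_. 0)(a+1 := int l)) 0 (\<lambda>_. 0)"
proof (induction a)
  case 0 then show ?case by simp
next
  case (Suc a)
  show ?case
  proof (cases "a = 0")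
    case True
    have e2: "Suc a + 1 = 2" using True by simp
    show ?thesis
    proof (cases "odd j")
      case True
      have g: "bseq n l j a = Cr (\<lambda>_. 0) 0 ((\<lambda>_. 0)(1 := int l))" using True \<open>a = 0\<close> by (simp add: ground_def)
      have i: "idx n j (Suc a) = 0" using True \<open>a = 0\<close> by (simp add: idx_def eps_def)
      have v: "vphi n 0 (Cr (\<lambda>_. 0) 0 ((\<lambda>_. 0)(1 := int l))) = int l" unfolding vphi_def pos_def by simp
      have "bseq n l j (Suc a) = the (fpow n l 0 l (Cr (\<lambda>_. 0) 0 ((\<lambda>_. 0)(1 := int l))))"
        unfolding bseq_Suc' i g v by simp
      also have "\<dots> = Cr ((\<lambda>_. 0)(2 := int l)) 0 (\<lambda>_. 0)" using Suc.prems move_0a[of n l] by simp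
      finally have X: "bseq n l j (Suc a) = Cr ((\<lambda>_. 0)(2 := int l)) 0 (\<lambda>_. 0)" .
      show ?thesis unfolding e2 by (rule X)
    next
      case False
      have g: "bseq n l j a = Cr ((\<lambda>_. 0)(1 := int l)) 0 (\<lambda>_. 0)" using False \<open>a = 0\<close> by (simp add: ground_def)
      have i: "idx n j (Suc a) = 1" using False \<open>a = 0\<close> by (simp add: idx_def eps_def)
      have v: "vphi n 1 (Cr ((\<lambda>_. 0)(1 := int l)) 0 (\<lambda>_. 0)) = int l" using Suc.prems unfolding vphi_def pos_def by simp
      have "bseq n l j (Suc a) = the (fpow n l 1 l (Cr ((\<lambda>_. 0)(1 := int l)) 0 (\<lambda>_. 0)))"
        unfolding bseq_Suc' i g v by simp
      also have "\<dots> = Cr ((\<lambda>_. 0)(2 := int l)) 0 (\<lambda>_. 0)" using Suc.prems move_x[of 1 n l] by (simp add: fun_eq_iff numeral_2_eq_2)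
      finally have X: "bseq n l j (Suc a) = Cr ((\<lambda>_. 0)(2 := int l)) 0 (\<lambda>_. 0)" .
      show ?thesis unfolding e2 by (rule X)
    qed
  next
    case False
    have g: "bseq n l j a = Cr ((\<lambda>_. 0)(Suc a := int l)) 0 (\<lambda>_. 0)" using Suc False by (simp add: fun_eq_iff)
    have i: "idx n j (Suc a) = Suc a" using Suc.prems False by (intro idx_first) auto
    have v: "vphi n (Suc a) (Cr ((\<lambda>_. 0)(Suc a := int l)) 0 (\<lambda>_. 0)) = int l" using Suc.prems unfolding vphi_def pos_def by auto
    have "bseq n l j (Suc a) = the (fpow n l (Suc a) l (Cr ((\<lambda>_. 0)(Suc a := int l)) 0 (\<lambda>_. 0)))"
      unfolding bseq_Suc' i g v by simp
    also have "\<dots> = Cr ((\<lambda>_. 0)(Suc a+1 := int l)) 0 (\<lambda>_. 0)" using Suc.prems move_x[of "Suc a" n l] by simp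
    finally show ?thesis .
  qed
qed

lemma bseq_second: "3 \<le> n \<Longrightarrow> 1 \<le> k \<Longrightarrow> k \<le> n-1 \<Longrightarrow> bseq n l j (n+k-1) = Cr (\<lambda>_. 0) 0 ((\<lambda>_. 0)(n-k+1 := int l))"
proof (induction k)
  case 0 then show ?case by simp
next
  case (Suc k)
  show ?case
  proof (cases "k = 0")
    case True
    have e: "n + Suc k - 1 = Suc (n-1)" using True Suc.prems by simp
    have g: "bseq n l j (n-1) = Cr ((\<lambda>_. 0)(n := int l)) 0 (\<lambda>_. 0)" using bseq_first[of n "n-1" l j] Suc.prems by simp
    have i: "idx n j (Suc (n-1)) = n" using Suc.prems by (subst idx_first) auto
    have v: "vphi n n (Cr ((\<lambda>_. 0)(n := int l)) 0 (\<lambda>_. 0)) = int (2*l)" using Suc.prems unfolding vphi_def by simp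
    have "bseq n l j (n + Suc k - 1) = the (fpow n l n (2*l) (Cr ((\<lambda>_. 0)(n := int l)) 0 (\<lambda>_. 0)))"
      unfolding e bseq_Suc' i g v by (simp only: nat_int)
    also have "\<dots> = Cr (\<lambda>_. 0) 0 ((\<lambda>_. 0)(n := int l))" using Suc.prems move_n[of n l] by simp
    also have "(\<lambda>_. 0)(n := int l) = (\<lambda>_. 0::int)(n - Suc k + 1 := int l)" using True Suc.prems by simp
    finally show ?thesis .
  next
    case False
    have e: "n + Suc k - 1 = Suc (n+k-1)" using False by simp
    have g: "bseq n l j (n+k-1) = Cr (\<lambda>_. 0) 0 ((\<lambda>_. 0)(n-k+1 := int l))" using Suc False by (simp add: fun_eq_iff)
    have i: "idx n j (Suc (n+k-1)) = n-k" using Suc.prems False by (subst idx_second) auto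
    have v: "vphi n (n-k) (Cr (\<lambda>_. 0) 0 ((\<lambda>_. 0)(n-k+1 := int l))) = int l" using Suc.prems False unfolding vphi_def pos_def by simp
    have "bseq n l j (n + Suc k - 1) = the (fpow n l (n-k) l (Cr (\<lambda>_. 0) 0 ((\<lambda>_. 0)(n-k+1 := int l))))"
      unfolding e bseq_Suc' i g v by simp
    also have "\<dots> = Cr (\<lambda>_. 0) 0 ((\<lambda>_. 0)(n-k := int l))" using Suc.prems False move_xb[of "n-k" n l] by simp
    also have "n - k = n - Suc k + 1" using Suc.prems by simp
    finally show ?thesis .
  qed
qed

lemma bseq_last: "3 \<le> n \<Longrightarrow> bseq n l j (2*n-1) = ground l (j+1)"
proof -
  assume n: "3 \<le> n"
  have e: "2*n-1 = Suc (n+(n-1)-1)" using n by simp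
  have g: "bseq n l j (n+(n-1)-1) = Cr (\<lambda>_. 0) 0 ((\<lambda>_. 0)(2 := int l))"
    using bseq_second[of n "n-1" l j] n by (simp add: numeral_2_eq_2)
  have i: "idx n j (Suc (n+(n-1)-1)) = eps (j+1)" using idx_last[of n j] e by simp
  show ?thesis
  proof (cases "odd j")
    case True
    have v: "vphi n 0 (Cr (\<lambda>_. 0) 0 ((\<lambda>_. 0)(2 := int l))) = int l" unfolding vphi_def pos_def by simp
    have "bseq n l j (2*n-1) = the (fpow n l 0 l (Cr (\<lambda>_. 0) 0 ((\<lambda>_. 0)(2 := int l))))"
      unfolding e bseq_Suc' i Suc_eq_plus1[symmetric] eps_odd[OF True] g v by simp
    also have "\<dots> = Cr ((\<lambda>_. 0)(1 := int l)) 0 (\<lambda>_. 0)" using n move_0b[of n l] by simp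
    finally show ?thesis using True by (simp add: ground_def)
  next
    case False
    have v: "vphi n 1 (Cr (\<lambda>_. 0) 0 ((\<lambda>_. 0)(2 := int l))) = int l" using n unfolding vphi_def pos_def by simp
    have ej: "eps (Suc j) = 1" using False by (simp add: eps_def)
    have "bseq n l j (2*n-1) = the (fpow n l 1 l (Cr (\<lambda>_. 0) 0 ((\<lambda>_. 0)(2 := int l))))"
      unfolding e bseq_Suc' i Suc_eq_plus1[symmetric] ej g v by simp
    also have "\<dots> = Cr (\<lambda>_. 0) 0 ((\<lambda>_. 0)(1 := int l))" using n move_xb[of 1 n l] by (simp add: numeral_2_eq_2)
    finally show ?thesis using False by (simp add: ground_def)
  qed
qed



lemma ground_B: "1 \<le> n \<Longrightarrow> ground l j \<in> Bcrys n l"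
proof -
  assume n: "1 \<le> n"
  have "sum ((\<lambda>_. 0)(1 := int l)) {1..n} = int l" using n by (intro sum_delta1) auto
  then show ?thesis unfolding ground_def Bcrys_iff weight_def by auto
qed

lemma fpow_B: "b \<in> Bcrys n l \<Longrightarrow> fpow n l i k b = Some c \<Longrightarrow> c \<in> Bcrys n l"
proof (induction k arbitrary: c)
  case 0 then show ?case by simp
next
  case (Suc k) then show ?case by (auto simp: ftil_def split: option.splits if_splits)
qed

lemma Bset_B: "1 \<le> n \<Longrightarrow> Bset n l j a \<subseteq> Bcrys n l"
proof (induction a)
  case 0 then show ?case using ground_B by simp
next
  case (Suc a) then show ?case using fpow_B by auto
qed

lemma veps_nonneg: "b \<in> Bcrys n l \<Longrightarrow> veps n i b \<ge> 0"
proof -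
  assume b: "b \<in> Bcrys n l"
  then have "\<And>k. xs b k \<ge> 0" "\<And>k. xbs b k \<ge> 0" "x0 b \<ge> 0" unfolding Bcrys_def by auto
  then show ?thesis unfolding veps_def pos_def by auto
qed

lemma eps_le: "eps j \<le> 1" by (simp add: eps_def)
lemma eps_ne: "eps (Suc j) \<noteq> eps j" by (simp add: eps_def)

lemma lam_zero: "2 \<le> n \<Longrightarrow> 1 \<le> a \<Longrightarrow> a \<le> 2*n-1 \<Longrightarrow> lam l j (idx n j a) = 0"
proof -
  assume a: "2 \<le> n" "1 \<le> a" "a \<le> 2*n-1"
  have "idx n j a \<noteq> eps j"
  proof (cases "a = 1 \<or> a = 2*n-1")
    case True then show ?thesis using eps_ne[of j] by (auto simp: idx_def)
  next
    case False then show ?thesis using a eps_le[of j] by (auto simp: idx_def)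
  qed
  then show ?thesis by (simp add: lam_def)
qed

theorem mainTheorem4:
  fixes n l :: nat
  assumes "n \<ge> 3" and "l \<ge> 1"
  shows
   "(\<forall>j\<ge>1. Bset n l j (2*n - 1) = Bcrys n l)
  \<and> (\<forall>j\<ge>1. \<forall>a\<in>{1..2*n-1}. \<forall>b\<in>Bset n l j (a - 1).
        int (lam l j (idx n j a)) \<le> veps n (idx n j a) b)
  \<and> (\<forall>j\<ge>1. \<forall>a\<in>{1..2*n-1}.
        (let i' = (if a = 2*n - 1 then idx n (j+1) 1 else idx n j (a+1)) in
          veps n i' (bseq n l j a) = 0 \<and> vphi n i' (bseq n l j a) > 0))
  \<and> (\<forall>j\<ge>1. fpow n l (idx n (j+1) 1) (lam l (j+1) (idx n (j+1) 1)) (bseq n l j (2*n - 1))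
             = Some (bseq n l (j+1) 0))
  \<and> (\<forall>j\<ge>1. Bset n l j 0 = {ground l j})
  \<and> (\<forall>j\<ge>1. \<forall>a\<in>{1..n-1}. odd j \<longrightarrow>
        Bset n l j a = {b \<in> Bcrys n l. (\<forall>i. xs b i \<noteq> 0 \<longrightarrow> 2 \<le> i \<and> i \<le> a+1)
                                     \<and> x0 b = 0 \<and> (\<forall>i. xbs b i \<noteq> 0 \<longrightarrow> i = 1)})
  \<and> (\<forall>j\<ge>1. \<forall>a\<in>{1..n-1}. even j \<longrightarrow>
        Bset n l j a = {b \<in> Bcrys n l. (\<forall>i. xs b i \<noteq> 0 \<longrightarrow> 1 \<le> i \<and> i \<le> a+1)
                                     \<and> x0 b = 0 \<and> (\<forall>i. xbs b i = 0)})
  \<and> (\<forall>j\<ge>1. \<forall>a\<in>{1..n-1}. odd j \<longrightarrow>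
        Bset n l j (n + a - 1) = {b \<in> Bcrys n l. (\<forall>i. xs b i \<noteq> 0 \<longrightarrow> 2 \<le> i \<and> i \<le> n)
                     \<and> (\<forall>i. xbs b i \<noteq> 0 \<longrightarrow> (n - a + 1 \<le> i \<and> i \<le> n) \<or> i = 1)})
  \<and> (\<forall>j\<ge>1. \<forall>a\<in>{1..n-1}. even j \<longrightarrow>
        Bset n l j (n + a - 1) = {b \<in> Bcrys n l. (\<forall>i. xs b i \<noteq> 0 \<longrightarrow> 1 \<le> i \<and> i \<le> n)
                     \<and> (\<forall>i. xbs b i \<noteq> 0 \<longrightarrow> n - a + 1 \<le> i \<and> i \<le> n)})
  \<and> (\<forall>j\<ge>1. bseq n l j 0 = ground l j)
  \<and> (\<forall>j\<ge>1. bseq n l j (2*n - 1) = ground l (j+1))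
  \<and> (\<forall>j\<ge>1. \<forall>a\<in>{1..n-1}. bseq n l j a = Cr ((\<lambda>_. 0)(a+1 := int l)) 0 (\<lambda>_. 0))
  \<and> (\<forall>j\<ge>1. \<forall>a\<in>{1..n-1}. bseq n l j (n + a - 1) = Cr (\<lambda>_. 0) 0 ((\<lambda>_. 0)(n - a + 1 := int l)))"
proof -
  have n3: "3 \<le> n" and l1: "1 \<le> l" using assms by auto
  have C1: "\<forall>j\<ge>1. Bset n l j (2*n - 1) = Bcrys n l"
    using odd_last[OF _ n3] even_last[OF _ n3] by blast
  have C2: "\<forall>j\<ge>1. \<forall>a\<in>{1..2*n-1}. \<forall>b\<in>Bset n l j (a - 1).
        int (lam l j (idx n j a)) \<le> veps n (idx n j a) b"
  proof (intro allI impI ballI)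
    fix j a b assume "a \<in> {1..2*n-1}" "b \<in> Bset n l j (a - 1)"
    then show "int (lam l j (idx n j a)) \<le> veps n (idx n j a) b"
      using lam_zero[of n a l j] n3 Bset_B[of n l j "a-1"] veps_nonneg by auto
  qed
  have C3: "\<forall>j\<ge>1. \<forall>a\<in>{1..2*n-1}.
        (let i' = (if a = 2*n - 1 then idx n (j+1) 1 else idx n j (a+1)) in
          veps n i' (bseq n l j a) = 0 \<and> vphi n i' (bseq n l j a) > 0)"
  proof (intro allI impI ballI)
    fix j a assume a: "a \<in> {1..2*n-1}"
    consider (f) "a \<le> n-1" | (s) "n \<le> a" "a \<le> 2*n-2" | (l) "a = 2*n-1" using a by force
    then show "let i' = (if a = 2*n - 1 then idx n (j+1) 1 else idx n j (a+1)) in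
          veps n i' (bseq n l j a) = 0 \<and> vphi n i' (bseq n l j a) > 0"
    proof cases
      case f
      have b: "bseq n l j a = Cr ((\<lambda>_. 0)(a+1 := int l)) 0 (\<lambda>_. 0)" using bseq_first[of n a l j] f a n3 by auto
      have i: "idx n j (a+1) = a+1" using f a n3 by (intro idx_first) auto
      have na: "a \<noteq> 2*n-1" using f n3 by auto
      show ?thesis using na f n3 l1 unfolding Let_def i b by (auto simp: veps_def vphi_def pos_def)
    next
      case s
      define k where "k = a - n + 1"
      have k: "1 \<le> k" "k \<le> n-1" "a = n+k-1" using s n3 unfolding k_def by auto
      have b: "bseq n l j a = Cr (\<lambda>_. 0) 0 ((\<lambda>_. 0)(n-k+1 := int l))" using bseq_second[of n k l j] k n3 by auto
      have na: "a \<noteq> 2*n-1" using s n3 by auto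
      show ?thesis
      proof (cases "a+1 = 2*n-1")
        case True
        then have i: "idx n j (a+1) = eps (Suc j)" using idx_last[of n j] by simp
        have k2: "n-k+1 = 2" using True k n3 by auto
        show ?thesis using na l1 n3 unfolding Let_def i b k2
          by (auto simp: veps_def vphi_def pos_def eps_def)
      next
        case False
        then have i: "idx n j (a+1) = n-k" using s k n3 by (subst idx_second) auto
        show ?thesis using na l1 n3 k False s unfolding Let_def i b
          by (auto simp: veps_def vphi_def pos_def)
      qed
    next
      case l
      have b: "bseq n l j a = ground l (j+1)" using bseq_last[OF n3] l by simp
      have i: "idx n (j+1) 1 = eps (Suc (Suc j))" by (simp add: idx_def)
      show ?thesis using l l1 n3 unfolding Let_def i b
        by (auto simp: veps_def vphi_def pos_def eps_def ground_def)
    qed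
  qed
  have C4: "\<forall>j\<ge>1. fpow n l (idx n (j+1) 1) (lam l (j+1) (idx n (j+1) 1)) (bseq n l j (2*n - 1))
             = Some (bseq n l (j+1) 0)"
  proof (intro allI impI)
    fix j :: nat
    have "lam l (j+1) (idx n (j+1) 1) = 0" using lam_zero[of n 1 l "j+1"] n3 by simp
    then show "fpow n l (idx n (j+1) 1) (lam l (j+1) (idx n (j+1) 1)) (bseq n l j (2*n - 1))
             = Some (bseq n l (j+1) 0)" using bseq_last[OF n3] by simp
  qed
  have C5: "\<forall>j\<ge>1. Bset n l j 0 = {ground l j}" by simp
  have C6: "\<forall>j\<ge>1. \<forall>a\<in>{1..n-1}. odd j \<longrightarrow>
        Bset n l j a = {b \<in> Bcrys n l. (\<forall>i. xs b i \<noteq> 0 \<longrightarrow> 2 \<le> i \<and> i \<le> a+1)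
                                     \<and> x0 b = 0 \<and> (\<forall>i. xbs b i \<noteq> 0 \<longrightarrow> i = 1)}"
    using odd_first[OF _ n3] by (auto simp: Supp_def)
  have C7: "\<forall>j\<ge>1. \<forall>a\<in>{1..n-1}. even j \<longrightarrow>
        Bset n l j a = {b \<in> Bcrys n l. (\<forall>i. xs b i \<noteq> 0 \<longrightarrow> 1 \<le> i \<and> i \<le> a+1)
                                     \<and> x0 b = 0 \<and> (\<forall>i. xbs b i = 0)}"
    using even_first[OF _ n3] by (auto simp: Supp_def)
  have C8: "\<forall>j\<ge>1. \<forall>a\<in>{1..n-1}. odd j \<longrightarrow>
        Bset n l j (n + a - 1) = {b \<in> Bcrys n l. (\<forall>i. xs b i \<noteq> 0 \<longrightarrow> 2 \<le> i \<and> i \<le> n)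
                     \<and> (\<forall>i. xbs b i \<noteq> 0 \<longrightarrow> (n - a + 1 \<le> i \<and> i \<le> n) \<or> i = 1)}"
    using odd_second[OF _ n3] by (auto simp: Supp_def)
  have C9: "\<forall>j\<ge>1. \<forall>a\<in>{1..n-1}. even j \<longrightarrow>
        Bset n l j (n + a - 1) = {b \<in> Bcrys n l. (\<forall>i. xs b i \<noteq> 0 \<longrightarrow> 1 \<le> i \<and> i \<le> n)
                     \<and> (\<forall>i. xbs b i \<noteq> 0 \<longrightarrow> n - a + 1 \<le> i \<and> i \<le> n)}"
    using even_second[OF _ n3] by (auto simp: Supp_def)
  have C10: "\<forall>j\<ge>1. bseq n l j 0 = ground l j" by simp
  have C11: "\<forall>j\<ge>1. bseq n l j (2*n - 1) = ground l (j+1)" using bseq_last[OF n3] by simp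
  have C12: "\<forall>j\<ge>1. \<forall>a\<in>{1..n-1}. bseq n l j a = Cr ((\<lambda>_. 0)(a+1 := int l)) 0 (\<lambda>_. 0)"
    using bseq_first[OF n3] by auto
  have C13: "\<forall>j\<ge>1. \<forall>a\<in>{1..n-1}. bseq n l j (n + a - 1) = Cr (\<lambda>_. 0) 0 ((\<lambda>_. 0)(n - a + 1 := int l))"
    using bseq_second[OF n3] by auto
  show ?thesis using C1 C2 C3 C4 C5 C6 C7 C8 C9 C10 C11 C12 C13 by blast
qed

end
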